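(* For every integer $n\ge 1$, $$\sum_{\pi\in \mathcal I^C_{2n}(321)}q^{\mathrm{maj}^+(\pi)}=\sum_{h=0}^{n} \binom{n}{h}_q+(q^n-1)\sum_{h=0}^{n-1} \binom{n-1}{h}_q=\sum_{h=0}^{n} q^{n-h}\binom{n}{h}_q,$$ where $\binom{n}{h}_q$ denotes the Gaussian ($q$-)binomial coefficient.
   Context: A permutation $\pi\in\mathcal S_m$ is centrosymmetric if $\pi(i)+\pi(m+1-i)=m+1$ for all $i$. $\mathcal I^C_m(321)$ is the set of centrosymmetric involutions in $\mathcal S_m$ avoiding the pattern $321$. A descent of $\pi$ is a position $i\in\{1,\dots,m-1\}$ with $\pi(i)>\pi(i+1)$; $\mathrm{Des}(\pi)$ is the set of descents. With $n=\lfloor m/2\rfloor$, $\mathrm{Des}^+(\pi)=\mathrm{Des}(\pi)\cap\{1,\dots,n\}$ and $\mathrm{maj}^+(\pi)=\sum_{i\in\mathrm{Des}^+(\pi)}i$. *)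

theory Defs
  imports "HOL-Combinatorics.Permutations"
begin

text \<open>Permutations of [m] = {1..m} are functions nat => nat that permute {1..m}.\<close>

definition centrosymmetric :: "nat \<Rightarrow> (nat \<Rightarrow> nat) \<Rightarrow> bool" where
  "centrosymmetric m \<pi> \<longleftrightarrow> (\<forall>i\<in>{1..m}. \<pi> i + \<pi> (m + 1 - i) = m + 1)"

definition is_involution :: "nat \<Rightarrow> (nat \<Rightarrow> nat) \<Rightarrow> bool" where
  "is_involution m \<pi> \<longleftrightarrow> (\<forall>i\<in>{1..m}. \<pi> (\<pi> i) = i)"

definition avoids321 :: "nat \<Rightarrow> (nat \<Rightarrow> nat) \<Rightarrow> bool" where
  "avoids321 m \<pi> \<longleftrightarrow>
     \<not> (\<exists>i j k. 1 \<le> i \<and> i < j \<and> j < k \<and> k \<le> m \<and> \<pi> i > \<pi> j \<and> \<pi> j > \<pi> k)"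

definition centro_inv_321 :: "nat \<Rightarrow> (nat \<Rightarrow> nat) set" where
  "centro_inv_321 m = {\<pi>. \<pi> permutes {1..m} \<and> is_involution m \<pi> \<and>
                           centrosymmetric m \<pi> \<and> avoids321 m \<pi>}"

definition Des :: "nat \<Rightarrow> (nat \<Rightarrow> nat) \<Rightarrow> nat set" where
  "Des m \<pi> = {i \<in> {1..<m}. \<pi> i > \<pi> (i + 1)}"

definition Des_plus :: "nat \<Rightarrow> (nat \<Rightarrow> nat) \<Rightarrow> nat set" where
  "Des_plus m \<pi> = Des m \<pi> \<inter> {1..m div 2}"

definition maj_plus :: "nat \<Rightarrow> (nat \<Rightarrow> nat) \<Rightarrow> nat" where
  "maj_plus m \<pi> = (\<Sum>i\<in>Des_plus m \<pi>. i)"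

text \<open>Gaussian binomial coefficient, via the q-Pascal recursion
  [n+1 choose k+1]_q = [n choose k]_q + q^(k+1) [n choose k+1]_q (which is division-free,
  so it makes sense for q in any commutative ring).\<close>
fun qbinomial :: "'a::comm_ring_1 \<Rightarrow> nat \<Rightarrow> nat \<Rightarrow> 'a" where
  "qbinomial q n 0 = 1"
| "qbinomial q 0 (Suc k) = 0"
| "qbinomial q (Suc n) (Suc k) = qbinomial q n k + q ^ Suc k * qbinomial q n (Suc k)"

end

theory Submission
  imports Defs
begin


lemma qbin_zero: "n < k \<Longrightarrow> qbinomial q n k = 0"
proof (induction n arbitrary: k)
  case 0 then show ?case by (cases k) auto
next
  case (Suc n) then show ?case by (cases k) auto
qed

lemma qbin_pascal2:
  "qbinomial q (Suc n) (Suc k) = q^(n-k) * qbinomial q n k + qbinomial q n (Suc k)"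
proof (induction n arbitrary: k)
  case 0 then show ?case by (cases k) auto
next
  case (Suc m)
  show ?case
  proof (cases k)
    case 0
    have "qbinomial q (Suc (Suc m)) (Suc 0) = 1 + q * qbinomial q (Suc m) (Suc 0)" by simp
    also have "\<dots> = 1 + q * (q^m + qbinomial q m (Suc 0))" using Suc.IH[of 0] by simp
    also have "\<dots> = q^(Suc m) + qbinomial q (Suc m) (Suc 0)" by (simp add: algebra_simps)
    finally show ?thesis using 0 by simp
  next
    case (Suc j)
    have IH1: "qbinomial q (Suc m) (Suc j) = q^(m-j) * qbinomial q m j + qbinomial q m (Suc j)"
      by (rule Suc.IH)
    have IH2: "qbinomial q (Suc m) (Suc (Suc j)) = q^(m - Suc j) * qbinomial q m (Suc j) + qbinomial q m (Suc (Suc j))"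
      by (rule Suc.IH)
    have pw: "q^(Suc (Suc j)) * (q^(m - Suc j) * qbinomial q m (Suc j)) = q^(Suc m - Suc j) * (q^(Suc j) * qbinomial q m (Suc j))"
    proof (cases "Suc j \<le> m")
      case True then have "Suc (Suc j) + (m - Suc j) = (Suc m - Suc j) + Suc j" by simp
      then have "q^(Suc (Suc j)) * q^(m - Suc j) = q^(Suc m - Suc j) * q^(Suc j)"
        by (metis power_add)
      then show ?thesis by (metis mult.assoc)
    next
      case False then show ?thesis by (simp add: qbin_zero)
    qed
    have "qbinomial q (Suc (Suc m)) (Suc k) = qbinomial q (Suc m) (Suc j) + q^(Suc (Suc j)) * qbinomial q (Suc m) (Suc (Suc j))"
      using Suc by simp
    also have "\<dots> = q^(m-j) * qbinomial q m j + qbinomial q m (Suc j) + q^(Suc (Suc j)) * (q^(m - Suc j) * qbinomial q m (Suc j)) + q^(Suc (Suc j)) * qbinomial q m (Suc (Suc j))"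
      unfolding IH1 IH2 by (simp add: algebra_simps)
    also have "\<dots> = q^(Suc m - k) * (qbinomial q m j + q^(Suc j) * qbinomial q m (Suc j)) + (qbinomial q m (Suc j) + q^(Suc (Suc j)) * qbinomial q m (Suc (Suc j)))"
      unfolding pw using Suc by (simp add: algebra_simps)
    also have "\<dots> = q^(Suc m - k) * qbinomial q (Suc m) k + qbinomial q (Suc m) (Suc k)"
      using Suc by simp
    finally show ?thesis .
  qed
qed

definition BB :: "'a::comm_ring_1 \<Rightarrow> nat \<Rightarrow> 'a" where
  "BB q n = (\<Sum>h=0..n. qbinomial q n h)"
definition DD :: "'a::comm_ring_1 \<Rightarrow> nat \<Rightarrow> 'a" where
  "DD q n = (\<Sum>h=0..n. q^h * qbinomial q n h)"
definition EE :: "'a::comm_ring_1 \<Rightarrow> nat \<Rightarrow> 'a" where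
  "EE q n = (\<Sum>h=0..n. q^(n-h) * qbinomial q n h)"

lemma BB_Suc: "BB q (Suc m) = BB q m + DD q m"
proof -
  have "BB q (Suc m) = 1 + (\<Sum>h=0..m. qbinomial q (Suc m) (Suc h))"
    unfolding BB_def sum.atLeast0_atMost_Suc_shift by (simp del: qbinomial.simps(3))
  also have "\<dots> = 1 + (\<Sum>h=0..m. qbinomial q m h) + (\<Sum>h=0..m. q^(Suc h) * qbinomial q m (Suc h))"
    by (simp add: sum.distrib)
  also have "(\<Sum>h=0..m. q^(Suc h) * qbinomial q m (Suc h)) = DD q m - 1"
  proof -
    have "DD q m = (\<Sum>h=0..Suc m. q^h * qbinomial q m h)"
      unfolding DD_def by (simp add: qbin_zero)
    also have "\<dots> = 1 + (\<Sum>h=0..m. q^(Suc h) * qbinomial q m (Suc h))"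
      unfolding sum.atLeast0_atMost_Suc_shift by simp
    finally show ?thesis by simp
  qed
  finally show ?thesis unfolding BB_def by simp
qed

lemma DD_Suc: "DD q (Suc m) = q^(Suc m) * BB q m + DD q m"
proof -
  have "DD q (Suc m) = 1 + (\<Sum>h=0..m. q^(Suc h) * qbinomial q (Suc m) (Suc h))"
    unfolding DD_def sum.atLeast0_atMost_Suc_shift by (simp del: qbinomial.simps(3))
  also have "\<dots> = 1 + (\<Sum>h=0..m. q^(Suc m) * qbinomial q m h) + (\<Sum>h=0..m. q^(Suc h) * qbinomial q m (Suc h))"
  proof -
    have "\<And>h. h \<in> {0..m} \<Longrightarrow> q^(Suc h) * qbinomial q (Suc m) (Suc h) = q^(Suc m) * qbinomial q m h + q^(Suc h) * qbinomial q m (Suc h)"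
    proof -
      fix h assume "h \<in> {0..m}"
      then have e: "Suc h + (m - h) = Suc m" by simp
      have p: "q^(Suc h) * q^(m-h) = q^(Suc m)" by (metis power_add e)
      show "q^(Suc h) * qbinomial q (Suc m) (Suc h) = q^(Suc m) * qbinomial q m h + q^(Suc h) * qbinomial q m (Suc h)"
        unfolding qbin_pascal2 distrib_left p[symmetric] by (simp add: algebra_simps)
    qed
    then show ?thesis by (simp add: sum.distrib)
  qed
  also have "(\<Sum>h=0..m. q^(Suc h) * qbinomial q m (Suc h)) = DD q m - 1"
  proof -
    have "DD q m = (\<Sum>h=0..Suc m. q^h * qbinomial q m h)"
      unfolding DD_def by (simp add: qbin_zero)
    also have "\<dots> = 1 + (\<Sum>h=0..m. q^(Suc h) * qbinomial q m (Suc h))"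
      unfolding sum.atLeast0_atMost_Suc_shift by simp
    finally show ?thesis by simp
  qed
  finally show ?thesis unfolding BB_def by (simp add: sum_distrib_left)
qed

lemma EE_Suc: "EE q (Suc m) = EE q m + q^(Suc m) * BB q m"
proof -
  have "EE q (Suc m) = q^(Suc m) + (\<Sum>h=0..m. q^(m - h) * qbinomial q (Suc m) (Suc h))"
    unfolding EE_def sum.atLeast0_atMost_Suc_shift by (simp del: qbinomial.simps(3))
  also have "\<dots> = q^(Suc m) + (\<Sum>h=0..m. q^(m-h) * qbinomial q m h) + (\<Sum>h=0..m. q^(Suc m) * qbinomial q m (Suc h))"
  proof -
    have "\<And>h. h \<in> {0..m} \<Longrightarrow> q^(m-h) * qbinomial q (Suc m) (Suc h) = q^(m-h) * qbinomial q m h + q^(Suc m) * qbinomial q m (Suc h)"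
    proof -
      fix h assume "h \<in> {0..m}"
      then have e: "(m - h) + Suc h = Suc m" by simp
      have p: "q^(m-h) * q^(Suc h) = q^(Suc m)" by (metis power_add e)
      show "q^(m-h) * qbinomial q (Suc m) (Suc h) = q^(m-h) * qbinomial q m h + q^(Suc m) * qbinomial q m (Suc h)"
        by (simp add: distrib_left p[symmetric] algebra_simps del: power_Suc)
    qed
    then show ?thesis by (simp add: sum.distrib)
  qed
  also have "(\<Sum>h=0..m. q^(Suc m) * qbinomial q m (Suc h)) = q^(Suc m) * (BB q m - 1)"
  proof -
    have "BB q m = (\<Sum>h=0..Suc m. qbinomial q m h)"
      unfolding BB_def by (simp add: qbin_zero)
    also have "\<dots> = 1 + (\<Sum>h=0..m. qbinomial q m (Suc h))"
      unfolding sum.atLeast0_atMost_Suc_shift by simp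
    finally show ?thesis by (simp add: sum_distrib_left)
  qed
  finally show ?thesis unfolding EE_def by (simp add: algebra_simps)
qed

lemma BB_Galois: "BB q (Suc (Suc m)) = 2 * BB q (Suc m) + (q^(Suc m) - 1) * BB q m"
  using BB_Suc[of q "Suc m"] BB_Suc[of q m] DD_Suc[of q m] by (simp add: algebra_simps)




lemma BB_EE: "BB q (Suc n) = EE q n + BB q n"
proof (induction n)
  case 0 then show ?case by (simp add: BB_def EE_def)
next
  case (Suc m)
  show ?case using BB_Galois[of q m] Suc EE_Suc[of q m] by (simp add: algebra_simps)
qed

definition stA :: "nat set \<Rightarrow> nat" where "stA S = (\<Sum>i\<in>{i\<in>S. Suc i \<notin> S}. i)"
definition stC :: "nat \<Rightarrow> nat set \<Rightarrow> nat" where "stC n S = (\<Sum>i\<in>{i\<in>S. Suc i \<notin> S \<and> i \<noteq> n}. i)"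
definition AA :: "'a::comm_ring_1 \<Rightarrow> nat \<Rightarrow> 'a" where "AA q n = (\<Sum>S\<in>Pow {1..n}. q ^ stA S)"
definition CC :: "'a::comm_ring_1 \<Rightarrow> nat \<Rightarrow> 'a" where "CC q n = (\<Sum>S\<in>Pow {1..n}. q ^ stC n S)"

lemma fin_sub: "S \<subseteq> {1..(n::nat)} \<Longrightarrow> finite S" by (meson finite_atLeastAtMost finite_subset)

lemma stA_ins: assumes "S \<subseteq> {1..n}" shows "stA (insert (Suc n) S) = Suc n + stC n S"
proof -
  have "{i\<in>insert (Suc n) S. Suc i \<notin> insert (Suc n) S} = insert (Suc n) {i\<in>S. Suc i \<notin> S \<and> i \<noteq> n}"
    using assms by auto
  moreover have "Suc n \<notin> {i\<in>S. Suc i \<notin> S \<and> i \<noteq> n}" using assms by auto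
  moreover have "finite {i\<in>S. Suc i \<notin> S \<and> i \<noteq> n}" using fin_sub[OF assms] by simp
  ultimately show ?thesis unfolding stA_def stC_def by simp
qed

lemma stC_Suc: assumes "S \<subseteq> {1..n}" shows "stC (Suc n) S = stA S"
proof -
  have "{i\<in>S. Suc i \<notin> S \<and> i \<noteq> Suc n} = {i\<in>S. Suc i \<notin> S}" using assms by auto
  then show ?thesis unfolding stA_def stC_def by simp
qed

lemma stC_ins: assumes "S \<subseteq> {1..n}" shows "stC (Suc n) (insert (Suc n) S) = stC n S"
proof -
  have "{i\<in>insert (Suc n) S. Suc i \<notin> insert (Suc n) S \<and> i \<noteq> Suc n} = {i\<in>S. Suc i \<notin> S \<and> i \<noteq> n}"
    using assms by auto
  then show ?thesis unfolding stC_def by simp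
qed

lemma Pow_Suc: "Pow {1..Suc n} = Pow {1..n} \<union> insert (Suc n) ` Pow {1..n}"
proof -
  have "{1..Suc n} = insert (Suc n) {1..n}" by auto
  then show ?thesis by (simp add: Pow_insert)
qed

lemma sum_Pow_Suc:
  fixes f :: "nat set \<Rightarrow> 'a::comm_ring_1"
  shows "(\<Sum>S\<in>Pow {1..Suc n}. f S) = (\<Sum>S\<in>Pow {1..n}. f S) + (\<Sum>S\<in>Pow {1..n}. f (insert (Suc n) S))"
proof -
  have d: "Pow {1..n} \<inter> insert (Suc n) ` Pow {1..n} = {}" by auto
  have i: "inj_on (insert (Suc n)) (Pow {1..n})"
  proof (rule inj_onI)
    fix S T assume a: "S \<in> Pow {1..n}" "T \<in> Pow {1..n}" "insert (Suc n) S = insert (Suc n) T"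
    have "Suc n \<notin> S" "Suc n \<notin> T" using a(1,2) by auto
    then show "S = T" using a(3) by (metis Diff_insert_absorb)
  qed
  show ?thesis unfolding Pow_Suc
    by (subst sum.union_disjoint) (use d i in \<open>auto simp: sum.reindex\<close>)
qed

lemma AA_Suc: "AA q (Suc n) = AA q n + q^(Suc n) * CC q n"
proof -
  have "AA q (Suc n) = AA q n + (\<Sum>S\<in>Pow {1..n}. q ^ stA (insert (Suc n) S))"
    unfolding AA_def by (rule sum_Pow_Suc)
  also have "(\<Sum>S\<in>Pow {1..n}. q ^ stA (insert (Suc n) S)) = (\<Sum>S\<in>Pow {1..n}. q^(Suc n) * q ^ stC n S)"
    by (rule sum.cong) (auto simp: stA_ins power_add)
  finally show ?thesis unfolding CC_def by (simp add: sum_distrib_left)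
qed

lemma CC_Suc: "CC q (Suc n) = AA q n + CC q n"
proof -
  have "CC q (Suc n) = (\<Sum>S\<in>Pow {1..n}. q ^ stC (Suc n) S) + (\<Sum>S\<in>Pow {1..n}. q ^ stC (Suc n) (insert (Suc n) S))"
    unfolding CC_def by (rule sum_Pow_Suc)
  also have "(\<Sum>S\<in>Pow {1..n}. q ^ stC (Suc n) S) = AA q n"
    unfolding AA_def by (rule sum.cong) (auto simp: stC_Suc)
  also have "(\<Sum>S\<in>Pow {1..n}. q ^ stC (Suc n) (insert (Suc n) S)) = CC q n"
    unfolding CC_def by (rule sum.cong) (auto simp: stC_ins)
  finally show ?thesis .
qed

lemma AA_CC: "CC q n = BB q n \<and> AA q n = EE q n"
proof (induction n)
  case 0 then show ?case by (simp add: AA_def CC_def BB_def EE_def stA_def stC_def)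
next
  case (Suc n)
  then show ?case using AA_Suc[of q n] CC_Suc[of q n] BB_EE[of q n] EE_Suc[of q n] by simp
qed

lemma ring_aux: "(a + b) + (x - 1) * b = a + x * (b::'a::comm_ring_1)"
  by (simp add: algebra_simps)

lemma second_eq: assumes "n \<ge> 1" shows "BB q n + (q^n - 1) * BB q (n-1) = EE q n"
proof (cases n)
  case 0 then show ?thesis using assms by simp
next
  case (Suc m)
  have "BB q (Suc m) + (q^Suc m - 1)*BB q m = EE q (Suc m)"
    unfolding BB_EE[of q m] EE_Suc[of q m] by (rule ring_aux)
  then show ?thesis by (simp only: Suc diff_Suc_1)
qed




lemma card_filter_Suc:
  "card {x\<in>{1..Suc t}. P x} = card {x\<in>{1..t}. P x} + (if P (Suc t) then 1 else 0)"
proof -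
  have "{x\<in>{1..Suc t}. P x} = (if P (Suc t) then insert (Suc t) {x\<in>{1..t}. P x} else {x\<in>{1..t}. P x})"
    by (auto simp: le_Suc_eq)
  then show ?thesis by simp
qed

locale dpath =
  fixes M :: nat and H :: "nat \<Rightarrow> nat"
  assumes H0: "H 0 = 0" and HM: "H M = 0"
    and step: "\<And>x. 1 \<le> x \<Longrightarrow> x \<le> M \<Longrightarrow> H x = Suc (H (x-1)) \<or> Suc (H x) = H (x-1) \<or> (H x = 0 \<and> H (x-1) = 0)"
begin

definition op :: "nat \<Rightarrow> bool" where "op x \<longleftrightarrow> 1 \<le> x \<and> x \<le> M \<and> H (x-1) < H x"
definition cl :: "nat \<Rightarrow> bool" where "cl x \<longleftrightarrow> 1 \<le> x \<and> x \<le> M \<and> H x < H (x-1)"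
definition Oc :: "nat \<Rightarrow> nat" where "Oc t = card {x\<in>{1..t}. op x}"
definition Cc :: "nat \<Rightarrow> nat" where "Cc t = card {x\<in>{1..t}. cl x}"

lemma op_not_cl: "op x \<Longrightarrow> \<not> cl x" unfolding op_def cl_def by auto

lemma Oc0[simp]: "Oc 0 = 0" unfolding Oc_def by simp
lemma Cc0[simp]: "Cc 0 = 0" unfolding Cc_def by simp
lemma Oc_Suc: "Oc (Suc t) = Oc t + (if op (Suc t) then 1 else 0)"
  unfolding Oc_def by (rule card_filter_Suc)
lemma Cc_Suc: "Cc (Suc t) = Cc t + (if cl (Suc t) then 1 else 0)"
  unfolding Cc_def by (rule card_filter_Suc)

lemma Oc_mono: "s \<le> t \<Longrightarrow> Oc s \<le> Oc t"
  unfolding Oc_def by (rule card_mono) auto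
lemma Cc_mono: "s \<le> t \<Longrightarrow> Cc s \<le> Cc t"
  unfolding Cc_def by (rule card_mono) auto

lemma OC: "t \<le> M \<Longrightarrow> Oc t = Cc t + H t"
proof (induction t)
  case 0 then show ?case by (simp add: H0)
next
  case (Suc t)
  then have IH: "Oc t = Cc t + H t" by simp
  have s: "H (Suc t) = Suc (H t) \<or> Suc (H (Suc t)) = H t \<or> (H (Suc t) = 0 \<and> H t = 0)"
    using step[of "Suc t"] Suc.prems by simp
  show ?case
  proof -
    consider (u) "H (Suc t) = Suc (H t)" | (d) "Suc (H (Suc t)) = H t" | (f) "H (Suc t) = 0 \<and> H t = 0"
      using s by blast
    then show ?thesis
    proof cases
      case u
      then have "op (Suc t)" "\<not> cl (Suc t)" using Suc.prems unfolding op_def cl_def by simp_all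
      then show ?thesis using IH u by (simp add: Oc_Suc Cc_Suc)
    next
      case d
      then have "\<not> op (Suc t)" "cl (Suc t)" using Suc.prems unfolding op_def cl_def by simp_all
      then show ?thesis using IH d by (simp add: Oc_Suc Cc_Suc)
    next
      case f
      then have "\<not> op (Suc t)" "\<not> cl (Suc t)" unfolding op_def cl_def by simp_all
      then show ?thesis using IH f by (simp add: Oc_Suc Cc_Suc)
    qed
  qed
qed

lemma cl_range: "cl x \<Longrightarrow> 1 \<le> x \<and> x \<le> M" unfolding cl_def by auto
lemma op_range: "op x \<Longrightarrow> 1 \<le> x \<and> x \<le> M" unfolding op_def by auto

lemma Cc_cl: "cl j \<Longrightarrow> Cc j = Suc (Cc (j-1))"
  using Cc_Suc[of "j-1"] cl_range[of j] by simp
lemma Oc_op: "op j \<Longrightarrow> Oc j = Suc (Oc (j-1))"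
  using Oc_Suc[of "j-1"] op_range[of j] by simp

lemma Cc_strict: assumes "cl i" "cl j" "i < j" shows "Cc i < Cc j"
proof -
  have "i \<le> j - 1" using assms by simp
  then show ?thesis using Cc_mono[of i "j-1"] Cc_cl[OF assms(2)] by simp
qed
lemma Oc_strict: assumes "op i" "op j" "i < j" shows "Oc i < Oc j"
proof -
  have "i \<le> j - 1" using assms by simp
  then show ?thesis using Oc_mono[of i "j-1"] Oc_op[OF assms(2)] by simp
qed

lemma Cc_inj: "cl i \<Longrightarrow> cl j \<Longrightarrow> Cc i = Cc j \<Longrightarrow> i = j"
  using Cc_strict[of i j] Cc_strict[of j i] by (cases i j rule: linorder_cases) auto
lemma Oc_inj: "op i \<Longrightarrow> op j \<Longrightarrow> Oc i = Oc j \<Longrightarrow> i = j"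
  using Oc_strict[of i j] Oc_strict[of j i] by (cases i j rule: linorder_cases) auto

lemma CM: "Cc M = Oc M" using OC[of M] HM by simp

lemma op_partner: assumes "op x" shows "\<exists>j. cl j \<and> Cc j = Oc x \<and> x < j"
proof -
  define k where "k = Oc x"
  have xM: "1 \<le> x" "x \<le> M" using op_range[OF assms] by auto
  have k1: "k \<ge> 1" unfolding k_def using Oc_op[OF assms] by simp
  have "H x \<ge> 1" using assms unfolding op_def by simp
  then have Cx: "Cc x < k" unfolding k_def using OC[OF xM(2)] by simp
  have PM: "k \<le> Cc M" unfolding k_def CM using Oc_mono[OF xM(2)] .
  define j where "j = (LEAST j. k \<le> Cc j)"
  have Pj: "k \<le> Cc j" unfolding j_def by (rule LeastI[of _ M]) (rule PM)
  have jM: "j \<le> M" unfolding j_def by (rule Least_le) (rule PM)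
  have j0: "j \<noteq> 0" using Pj k1 by (cases j) auto
  have "\<not> k \<le> Cc (j-1)" unfolding j_def
    by (rule not_less_Least) (use j0 in \<open>simp add: j_def\<close>)
  then have lt: "Cc (j-1) < k" by simp
  have e: "Cc j = Cc (j-1) + (if cl j then 1 else 0)" using Cc_Suc[of "j-1"] j0 by simp
  then have clj: "cl j" and Cj: "Cc j = k" using lt Pj by (auto split: if_splits)
  have "x < j"
  proof (rule ccontr)
    assume "\<not> x < j" then have "Cc j \<le> Cc x" using Cc_mono by simp
    then show False using Cj Cx by simp
  qed
  then show ?thesis using clj Cj k_def by blast
qed

lemma cl_partner: assumes "cl x" shows "\<exists>i. op i \<and> Oc i = Cc x \<and> i < x"
proof -
  define k where "k = Cc x"
  have xM: "1 \<le> x" "x \<le> M" using cl_range[OF assms] by auto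
  have k1: "k = Suc (Cc (x-1))" unfolding k_def using Cc_cl[OF assms] by simp
  have "H (x-1) \<ge> 1" using assms unfolding cl_def by simp
  then have PM: "k \<le> Oc (x-1)" unfolding k1 using OC[of "x-1"] xM by simp
  define i where "i = (LEAST i. k \<le> Oc i)"
  have Pi: "k \<le> Oc i" unfolding i_def by (rule LeastI[of _ "x-1"]) (rule PM)
  have iM: "i \<le> x-1" unfolding i_def by (rule Least_le) (rule PM)
  have i0: "i \<noteq> 0" using Pi k1 by (cases i) auto
  have "\<not> k \<le> Oc (i-1)" unfolding i_def
    by (rule not_less_Least) (use i0 in \<open>simp add: i_def\<close>)
  then have lt: "Oc (i-1) < k" by simp
  have e: "Oc i = Oc (i-1) + (if op i then 1 else 0)" using Oc_Suc[of "i-1"] i0 by simp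
  then have opi: "op i" and Oi: "Oc i = k" using lt Pi by (auto split: if_splits)
  have "i < x" using iM xM by simp
  then show ?thesis using opi Oi k_def by blast
qed

definition pp :: "nat \<Rightarrow> nat" where
  "pp x = (if op x then (THE j. cl j \<and> Cc j = Oc x) else if cl x then (THE i. op i \<and> Oc i = Cc x) else x)"

lemma pp_op: assumes "op x" shows "cl (pp x) \<and> Cc (pp x) = Oc x \<and> x < pp x"
proof -
  obtain j where j: "cl j" "Cc j = Oc x" "x < j" using op_partner[OF assms] by blast
  have "(THE j. cl j \<and> Cc j = Oc x) = j"
    by (rule the_equality) (use j Cc_inj in auto)
  then show ?thesis using j assms unfolding pp_def by simp
qed

lemma pp_cl: assumes "cl x" shows "op (pp x) \<and> Oc (pp x) = Cc x \<and> pp x < x"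
proof -
  obtain i where i: "op i" "Oc i = Cc x" "i < x" using cl_partner[OF assms] by blast
  have "(THE i. op i \<and> Oc i = Cc x) = i"
    by (rule the_equality) (use i Oc_inj in auto)
  then show ?thesis using i assms op_not_cl unfolding pp_def by auto
qed

lemma pp_fix: "\<not> op x \<Longrightarrow> \<not> cl x \<Longrightarrow> pp x = x" unfolding pp_def by simp

lemma pp_pp: "pp (pp x) = x"
proof (cases "op x")
  case True
  then have a: "cl (pp x)" "Cc (pp x) = Oc x" using pp_op by auto
  then have "op (pp (pp x))" "Oc (pp (pp x)) = Oc x" using pp_cl by auto
  then show ?thesis using Oc_inj True by blast
next
  case False
  show ?thesis
  proof (cases "cl x")
    case True
    then have a: "op (pp x)" "Oc (pp x) = Cc x" using pp_cl by auto
    then have "cl (pp (pp x))" "Cc (pp (pp x)) = Cc x" using pp_op by auto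
    then show ?thesis using Cc_inj True by blast
  next
    case False
    then show ?thesis using \<open>\<not> op x\<close> by (simp add: pp_fix)
  qed
qed

lemma pp_out: "x \<notin> {1..M} \<Longrightarrow> pp x = x"
  using op_range cl_range pp_fix by auto

lemma pp_permutes: "pp permutes {1..M}"
  unfolding permutes_def
proof (intro conjI allI impI)
  fix x assume "x \<notin> {1..M}" then show "pp x = x" by (rule pp_out)
next
  fix y show "\<exists>!x. pp x = y"
    by (rule ex1I[of _ "pp y"]) (simp add: pp_pp, metis pp_pp)
qed

lemma fixed_H: assumes "1 \<le> x" "x \<le> M" "\<not> op x" "\<not> cl x" shows "H x = 0 \<and> H (x-1) = 0"
  using step[OF assms(1,2)] assms unfolding op_def cl_def by auto

lemma pp_exc: "1 \<le> x \<Longrightarrow> x \<le> M \<Longrightarrow> x < pp x \<longleftrightarrow> op x"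
  using pp_op pp_cl pp_fix by (metis less_asym less_irrefl)

lemma inc_op: assumes "op x" "op y" "x < y" shows "pp x < pp y"
proof (rule ccontr)
  assume "\<not> pp x < pp y"
  then have "Cc (pp y) \<le> Cc (pp x)" using Cc_mono by simp
  moreover have "Oc x < Oc y" using Oc_strict assms by blast
  ultimately show False using pp_op assms by auto
qed

lemma inc_nonop: assumes "1 \<le> x" "y \<le> M" "x < y" "\<not> op x" "\<not> op y" shows "pp x < pp y"
proof (cases "cl x")
  case cx: True
  show ?thesis
  proof (cases "cl y")
    case True
    have "Cc x < Cc y" using Cc_strict cx True assms by blast
    then have "Oc (pp x) < Oc (pp y)" using pp_cl cx True by auto
    then show ?thesis using Oc_mono by (meson leI less_le_not_le)
  next
    case False
    then show ?thesis using pp_cl[OF cx] pp_fix assms by auto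
  qed
next
  case cx: False
  show ?thesis
  proof (cases "cl y")
    case True
    have fx: "pp x = x" using pp_fix cx assms by auto
    have Hx: "H x = 0" using fixed_H[of x] assms cx by auto
    then have OCx: "Oc x = Cc x" using OC[of x] assms by simp
    obtain "op (pp y)" "Oc (pp y) = Cc y" using pp_cl[OF True] by auto
    show ?thesis
    proof (rule ccontr)
      assume "\<not> pp x < pp y"
      then have "pp y \<le> x" using fx by simp
      then have "Oc (pp y) \<le> Oc x" using Oc_mono by simp
      also have "\<dots> \<le> Cc (y-1)" using OCx Cc_mono[of x "y-1"] assms by simp
      also have "\<dots> < Cc y" using Cc_cl[OF True] by simp
      finally show False using \<open>Oc (pp y) = Cc y\<close> by simp
    qed
  next
    case False
    then show ?thesis using pp_fix cx assms by auto
  qed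
qed

lemma pp_avoids: "avoids321 M pp"
  unfolding avoids321_def
proof
  assume "\<exists>i j k. 1 \<le> i \<and> i < j \<and> j < k \<and> k \<le> M \<and> pp i > pp j \<and> pp j > pp k"
  then obtain i j k where a: "1 \<le> i" "i < j" "j < k" "k \<le> M" "pp i > pp j" "pp j > pp k" by blast
  show False
  proof (cases "op i")
    case True
    show False
    proof (cases "op j")
      case True then show False using inc_op \<open>op i\<close> a by fastforce
    next
      case nj: False
      show False
      proof (cases "op k")
        case True then show False using inc_op \<open>op i\<close> a by fastforce
      next
        case False then show False using inc_nonop[of j k] nj a by fastforce
      qed
    qed
  next
    case ni: False
    show False
    proof (cases "op j")
      case False then show False using inc_nonop[of i j] ni a by fastforce
    next
      case oj: True
      show False
      proof (cases "op k")
        case True then show False using inc_op oj a by fastforce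
      next
        case False then show False using inc_nonop[of i k] ni a by fastforce
      qed
    qed
  qed
qed

lemma pp_inv: "is_involution M pp" unfolding is_involution_def using pp_pp by simp

end

locale sdpath = dpath +
  assumes sym: "\<And>t. t \<le> M \<Longrightarrow> H (M - t) = H t"
begin

lemma op_mirror: "1 \<le> x \<Longrightarrow> x \<le> M \<Longrightarrow> op (M + 1 - x) \<longleftrightarrow> cl x"
proof -
  assume x: "1 \<le> x" "x \<le> M"
  have a: "H (M + 1 - x - 1) = H x" using sym[of x] x by simp
  have b: "H (M + 1 - x) = H (x - 1)" using sym[of "x-1"] x by (simp add: Suc_diff_le)
  show ?thesis unfolding op_def cl_def using a b x by auto
qed

lemma cl_mirror: "1 \<le> x \<Longrightarrow> x \<le> M \<Longrightarrow> cl (M + 1 - x) \<longleftrightarrow> op x"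
proof -
  assume x: "1 \<le> x" "x \<le> M"
  have a: "H (M + 1 - x - 1) = H x" using sym[of x] x by simp
  have b: "H (M + 1 - x) = H (x - 1)" using sym[of "x-1"] x by (simp add: Suc_diff_le)
  show ?thesis unfolding op_def cl_def using a b x by auto
qed

lemma OCsym: "t \<le> M \<Longrightarrow> Oc (M - t) + Cc t = Cc M"
proof (induction t)
  case 0 then show ?case using CM by simp
next
  case (Suc t)
  have e: "M - t = Suc (M - Suc t)" using Suc.prems by simp
  have "op (M - t) \<longleftrightarrow> cl (Suc t)" using op_mirror[of "Suc t"] Suc.prems by simp
  then show ?case using Suc Oc_Suc[of "M - Suc t"] Cc_Suc[of t] e by (simp split: if_splits)
qed

lemma CCsym: "t \<le> M \<Longrightarrow> Cc (M - t) + Oc t = Cc M"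
  using OCsym[of t] OC[of t] OC[of "M - t"] sym[of t] by simp

lemma pp_centro_op: assumes "op x" shows "pp x + pp (M + 1 - x) = M + 1"
proof -
  obtain clj: "cl (pp x)" and Cj: "Cc (pp x) = Oc x" using pp_op[OF assms] by auto
  define j where "j = pp x"
  have x: "1 \<le> x" "x \<le> M" using op_range assms by auto
  have j: "1 \<le> j" "j \<le> M" using cl_range clj j_def by auto
  have clx': "cl (M + 1 - x)" using cl_mirror x assms by simp
  have opj': "op (M + 1 - j)" using op_mirror j clj j_def by simp
  have "Oc (M - (j - 1)) + Cc (j-1) = Cc M" using OCsym[of "j-1"] j by simp
  moreover have "Cc (M - (x - 1)) + Oc (x-1) = Cc M" using CCsym[of "x-1"] x by simp
  moreover have "Cc (j-1) = Oc (x-1)" using Cc_cl[OF clj] Oc_op[OF assms] Cj j_def by simp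
  moreover have "M - (j - 1) = M + 1 - j" "M - (x - 1) = M + 1 - x" using j x by auto
  ultimately have eq: "Oc (M + 1 - j) = Cc (M + 1 - x)" by simp
  have "op (pp (M + 1 - x))" "Oc (pp (M + 1 - x)) = Cc (M + 1 - x)" using pp_cl[OF clx'] by auto
  then have "pp (M + 1 - x) = M + 1 - j" using Oc_inj opj' eq by metis
  then show ?thesis using j j_def by simp
qed

lemma pp_centro: "centrosymmetric M pp"
  unfolding centrosymmetric_def
proof
  fix x assume "x \<in> {1..M}"
  then have x: "1 \<le> x" "x \<le> M" by auto
  show "pp x + pp (M + 1 - x) = M + 1"
  proof (cases "op x")
    case True then show ?thesis by (rule pp_centro_op)
  next
    case nop: False
    show ?thesis
    proof (cases "cl x")
      case True
      then have "op (M + 1 - x)" using op_mirror x by simp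
      then have "pp (M + 1 - x) + pp (M + 1 - (M + 1 - x)) = M + 1" by (rule pp_centro_op)
      moreover have "M + 1 - (M + 1 - x) = x" using x by simp
      ultimately show ?thesis by simp
    next
      case False
      have "\<not> op (M + 1 - x)" "\<not> cl (M + 1 - x)" using op_mirror cl_mirror x nop False by auto
      then show ?thesis using pp_fix nop False x by simp
    qed
  qed
qed

end




fun ht :: "nat set \<Rightarrow> nat \<Rightarrow> nat" where
  "ht S 0 = 0"
| "ht S (Suc i) = (if Suc i \<in> S then Suc (ht S i) else ht S i - 1)"

definition HS :: "nat set \<Rightarrow> nat \<Rightarrow> nat \<Rightarrow> nat" where
  "HS S n t = ht S (min t (2*n - t))"

lemma ht_step: "ht S (Suc y) = Suc (ht S y) \<or> Suc (ht S (Suc y)) = ht S y \<or> (ht S (Suc y) = 0 \<and> ht S y = 0)"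
  by (cases "ht S y") auto

lemma sdpath_HS: "sdpath (2*n) (HS S n)"
proof (unfold_locales)
  show "HS S n 0 = 0" unfolding HS_def by simp
  show "HS S n (2*n) = 0" unfolding HS_def by simp
next
  fix x :: nat assume x: "1 \<le> x" "x \<le> 2*n"
  show "HS S n x = Suc (HS S n (x-1)) \<or> Suc (HS S n x) = HS S n (x-1) \<or> (HS S n x = 0 \<and> HS S n (x-1) = 0)"
  proof (cases "x \<le> n")
    case True
    have m: "min x (2*n - x) = Suc (x-1)" "min (x-1) (2*n-(x-1)) = x-1" using x True by auto
    have a: "HS S n x = ht S (Suc (x-1))" "HS S n (x-1) = ht S (x-1)"
      unfolding HS_def m by (rule refl)+
    show ?thesis unfolding a by (rule ht_step)
  next
    case False
    have m: "min x (2*n - x) = 2*n-x" "min (x-1) (2*n-(x-1)) = Suc (2*n-x)" using x False by auto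
    have a: "HS S n x = ht S (2*n-x)" "HS S n (x-1) = ht S (Suc (2*n-x))"
      unfolding HS_def m by (rule refl)+
    show ?thesis unfolding a using ht_step[of S "2*n-x"] by auto
  qed
next
  fix t assume "t \<le> 2*n"
  then show "HS S n (2*n - t) = HS S n t" unfolding HS_def by (simp add: min.commute)
qed

definition Phi :: "nat \<Rightarrow> (nat \<Rightarrow> nat) \<Rightarrow> nat set" where
  "Phi n \<pi> = {i\<in>{1..n}. i < \<pi> i}"

lemma pS_props:
  assumes "S \<subseteq> {1..n}"
  shows "dpath.pp (2*n) (HS S n) \<in> centro_inv_321 (2*n) \<and> Phi n (dpath.pp (2*n) (HS S n)) = S"
proof -
  interpret sdpath "2*n" "HS S n" by (rule sdpath_HS)
  have "pp \<in> centro_inv_321 (2*n)"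
    unfolding centro_inv_321_def using pp_permutes pp_inv pp_centro pp_avoids by simp
  moreover have "Phi n pp = S"
  proof (rule set_eqI)
    fix i
    show "i \<in> Phi n pp \<longleftrightarrow> i \<in> S"
    proof (cases "i \<in> {1..n}")
      case True
      then have i: "1 \<le> i" "i \<le> n" by auto
      have "i < pp i \<longleftrightarrow> op i" using pp_exc[of i] i by simp
      also have "\<dots> \<longleftrightarrow> ht S (i-1) < ht S (Suc (i-1))"
      proof -
        have m: "min i (2*n - i) = Suc (i-1)" "min (i-1) (2*n-(i-1)) = i-1" using i by auto
        show ?thesis unfolding op_def HS_def m using i by simp
      qed
      also have "\<dots> \<longleftrightarrow> i \<in> S"
      proof -
        obtain k where k: "i = Suc k" using i by (cases i) auto
        show ?thesis unfolding k by (cases "ht S k") auto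
      qed
      finally show ?thesis unfolding Phi_def using True by simp
    next
      case False then show ?thesis unfolding Phi_def using assms by auto
    qed
  qed
  ultimately show ?thesis by simp
qed




lemma T_perm: "\<pi> \<in> centro_inv_321 m \<Longrightarrow> \<pi> permutes {1..m}"
  unfolding centro_inv_321_def by simp
lemma T_inv: "\<pi> \<in> centro_inv_321 m \<Longrightarrow> 1 \<le> i \<Longrightarrow> i \<le> m \<Longrightarrow> \<pi> (\<pi> i) = i"
  unfolding centro_inv_321_def is_involution_def by simp
lemma T_centro: "\<pi> \<in> centro_inv_321 m \<Longrightarrow> 1 \<le> i \<Longrightarrow> i \<le> m \<Longrightarrow> \<pi> i + \<pi> (m + 1 - i) = m + 1"
  unfolding centro_inv_321_def centrosymmetric_def by simp
lemma T_av: "\<pi> \<in> centro_inv_321 m \<Longrightarrow> 1 \<le> i \<Longrightarrow> i < j \<Longrightarrow> j < k \<Longrightarrow> k \<le> m \<Longrightarrow> \<pi> i > \<pi> j \<Longrightarrow> \<pi> j > \<pi> k \<Longrightarrow> False"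
  unfolding centro_inv_321_def avoids321_def by blast
lemma T_range: "\<pi> \<in> centro_inv_321 m \<Longrightarrow> 1 \<le> i \<Longrightarrow> i \<le> m \<Longrightarrow> 1 \<le> \<pi> i \<and> \<pi> i \<le> m"
  using permutes_in_image[OF T_perm] by (metis atLeastAtMost_iff)
lemma T_inj: "\<pi> \<in> centro_inv_321 m \<Longrightarrow> \<pi> i = \<pi> j \<Longrightarrow> i = j"
  using permutes_inj[OF T_perm] by (metis injD)
lemma T_out: "\<pi> \<in> centro_inv_321 m \<Longrightarrow> i \<notin> {1..m} \<Longrightarrow> \<pi> i = i"
  using T_perm permutes_not_in by metis

lemma exc_inc:
  assumes T: "\<pi> \<in> centro_inv_321 m" and "1 \<le> i" "i < j" "j \<le> m" "i < \<pi> i" "j < \<pi> j"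
  shows "\<pi> i < \<pi> j"
proof (rule ccontr)
  assume "\<not> \<pi> i < \<pi> j"
  moreover have "\<pi> i \<noteq> \<pi> j" using T_inj[OF T] assms by auto
  ultimately have lt: "\<pi> j < \<pi> i" by simp
  have r: "\<pi> i \<le> m" using T_range[OF T, of i] assms by simp
  have "\<pi> (\<pi> i) = i" using T_inv[OF T, of i] assms by simp
  then show False using T_av[OF T, of i j "\<pi> i"] assms lt r by simp
qed

lemma nonexc_inc:
  assumes T: "\<pi> \<in> centro_inv_321 m" and "1 \<le> i" "i < j" "j \<le> m" "\<pi> i \<le> i" "\<pi> j \<le> j"
  shows "\<pi> i < \<pi> j"
proof (rule ccontr)
  assume "\<not> \<pi> i < \<pi> j"
  moreover have "\<pi> i \<noteq> \<pi> j" using T_inj[OF T] assms by auto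
  ultimately have lt: "\<pi> j < \<pi> i" by simp
  have rj: "1 \<le> \<pi> j" using T_range[OF T, of j] assms by simp
  have ri: "1 \<le> \<pi> i" using T_range[OF T, of i] assms by simp
  have ij: "\<pi> (\<pi> j) = j" "\<pi> (\<pi> i) = i" using T_inv[OF T] assms by auto
  show False
  proof (cases "\<pi> i = i")
    case True
    then show False using T_av[OF T, of "\<pi> j" i j] assms lt rj ij by simp
  next
    case False
    then have "\<pi> i < i" using assms by simp
    then have "\<pi> (\<pi> j) < \<pi> (\<pi> i)"
      using exc_inc[OF T, of "\<pi> j" "\<pi> i"] rj lt ij assms by simp
    then show False using ij assms by simp
  qed
qed

lemma uniq_core:
  assumes P: "\<pi> \<in> centro_inv_321 (2*n)" and S: "\<sigma> \<in> centro_inv_321 (2*n)"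
    and Ph: "Phi n \<pi> = Phi n \<sigma>" and i: "1 \<le> i" "i \<le> n" and lessi: "\<forall>c<i. \<pi> c = \<sigma> c"
    and ia: "i < \<pi> i" and ab: "\<pi> i < \<sigma> i"
  shows False
proof -
  define a where "a = \<pi> i"
  define b where "b = \<sigma> i"
  have bm: "b \<le> 2*n" using T_range[OF S, of i] i unfolding b_def by simp
  have am: "a \<le> 2*n" using T_range[OF P, of i] i unfolding a_def by simp
  have pa: "\<pi> a = i" using T_inv[OF P, of i] i unfolding a_def by simp
  have sb: "\<sigma> b = i" using T_inv[OF S, of i] i unfolding b_def by simp
  have ia': "i < a" "a < b" using ia ab unfolding a_def b_def by auto
  have sa: "a < \<sigma> a"
  proof (rule ccontr)
    assume "\<not> a < \<sigma> a"
    then consider "\<sigma> a = a" | "\<sigma> a < a" by linarith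
    then show False
    proof cases
      case 1
      then show False using T_av[OF S, of i a b] i ia' bm sb b_def by simp
    next
      case 2
      define c where "c = \<sigma> a"
      have sc: "\<sigma> c = a" using T_inv[OF S, of a] ia' am i unfolding c_def by simp
      have c1: "1 \<le> c" using T_range[OF S, of a] ia' am i unfolding c_def by simp
      consider "c < i" | "c = i" | "i < c" by linarith
      then show False
      proof cases
        case 1
        then have "\<pi> c = a" using lessi sc by simp
        then show False using T_inj[OF P, of c i] a_def 1 by simp
      next
        case 2 then show False using sc b_def ia' by simp
      next
        case 3
        have "\<sigma> i < \<sigma> c" using exc_inc[OF S, of i c] 3 i c1 sc 2 c_def ia' b_def am by simp
        then show False using sc b_def ia' by simp
      qed
    qed
  qed
  show False
  proof (cases "a \<le> n")
    case True
    have "a \<in> Phi n \<sigma>" unfolding Phi_def using True sa ia' i by simp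
    moreover have "a \<notin> Phi n \<pi>" unfolding Phi_def using pa ia' by simp
    ultimately show False using Ph by simp
  next
    case False
    define a' where "a' = 2*n + 1 - a"
    have a'r: "1 \<le> a'" "a' \<le> n" using False am unfolding a'_def by auto
    have "\<pi> a + \<pi> a' = 2*n + 1" using T_centro[OF P, of a] ia' am i unfolding a'_def by simp
    then have "a' < \<pi> a'" using pa ia' am unfolding a'_def by linarith
    then have "a' \<in> Phi n \<pi>" unfolding Phi_def using a'r by simp
    moreover have "\<sigma> a + \<sigma> a' = 2*n + 1" using T_centro[OF S, of a] ia' am i unfolding a'_def by simp
    then have "\<not> a' < \<sigma> a'" using sa am unfolding a'_def by linarith
    then have "a' \<notin> Phi n \<sigma>" unfolding Phi_def by simp
    ultimately show False using Ph by simp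
  qed
qed

lemma uniq:
  assumes P: "\<pi> \<in> centro_inv_321 (2*n)" and S: "\<sigma> \<in> centro_inv_321 (2*n)"
    and Ph: "Phi n \<pi> = Phi n \<sigma>"
  shows "\<pi> = \<sigma>"
proof (rule ccontr)
  assume "\<pi> \<noteq> \<sigma>"
  then have ex: "\<exists>x. \<pi> x \<noteq> \<sigma> x" by auto
  define i where "i = (LEAST x. \<pi> x \<noteq> \<sigma> x)"
  have di: "\<pi> i \<noteq> \<sigma> i" unfolding i_def by (rule LeastI_ex[OF ex])
  have lessi: "\<forall>c<i. \<pi> c = \<sigma> c" unfolding i_def using not_less_Least by blast
  have "i \<in> {1..2*n}"
  proof (rule ccontr)
    assume "i \<notin> {1..2*n}"
    then show False using di T_out[OF P, of i] T_out[OF S, of i] by simp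
  qed
  then have ir: "1 \<le> i" "i \<le> 2*n" by auto
  have in_: "i \<le> n"
  proof (rule ccontr)
    assume "\<not> i \<le> n"
    define i' where "i' = 2*n + 1 - i"
    have "i' < i" "1 \<le> i'" "i' \<le> 2*n" using ir \<open>\<not> i \<le> n\<close> unfolding i'_def by auto
    have "\<pi> i + \<pi> i' = 2*n+1" "\<sigma> i + \<sigma> i' = 2*n+1"
      using T_centro[OF P, of i] T_centro[OF S, of i] ir unfolding i'_def by auto
    then have "\<pi> i' \<noteq> \<sigma> i'" using di by simp
    then show False using lessi \<open>i' < i\<close> by simp
  qed
  show False
  proof (cases "i < \<pi> i")
    case True
    then have "i \<in> Phi n \<pi>" unfolding Phi_def using ir in_ by simp
    then have "i \<in> Phi n \<sigma>" using Ph by simp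
    then have "i < \<sigma> i" unfolding Phi_def by simp
    consider "\<pi> i < \<sigma> i" | "\<sigma> i < \<pi> i" using di by linarith
    then show False
    proof cases
      case 1 then show False using uniq_core[OF P S Ph ir(1) in_ lessi True] by simp
    next
      case 2 then show False using uniq_core[OF S P Ph[symmetric] ir(1) in_ _ \<open>i < \<sigma> i\<close>] lessi by simp
    qed
  next
    case False
    then have "i \<notin> Phi n \<pi>" unfolding Phi_def by simp
    then have "i \<notin> Phi n \<sigma>" using Ph by simp
    then have F2: "\<not> i < \<sigma> i" using ir in_ unfolding Phi_def by simp
    consider "\<pi> i < i" | "\<sigma> i < i" using di False F2 by linarith
    then show False
    proof cases
      case 1
      define j where "j = \<pi> i"
      have "\<pi> j = i" using T_inv[OF P, of i] ir j_def by simp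
      then have "\<sigma> j = i" using lessi 1 j_def by simp
      then have "\<sigma> i = j" using T_inv[OF S, of j] T_range[OF P, of i] ir j_def by auto
      then show False using di j_def by simp
    next
      case 2
      define j where "j = \<sigma> i"
      have "\<sigma> j = i" using T_inv[OF S, of i] ir j_def by simp
      then have "\<pi> j = i" using lessi 2 j_def by simp
      then have "\<pi> i = j" using T_inv[OF P, of j] T_range[OF S, of i] ir j_def by auto
      then show False using di j_def by simp
    qed
  qed
qed




lemma des_step:
  assumes T: "\<pi> \<in> centro_inv_321 m" and i: "1 \<le> i" "Suc i \<le> m"
  shows "\<pi> (Suc i) < \<pi> i \<longleftrightarrow> i < \<pi> i \<and> \<not> Suc i < \<pi> (Suc i)"
proof -
  have ne: "\<pi> (Suc i) \<noteq> \<pi> i" using T_inj[OF T, of "Suc i" i] by auto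
  consider "i < \<pi> i" "Suc i < \<pi> (Suc i)" | "\<not> i < \<pi> i" "Suc i < \<pi> (Suc i)"
    | "\<not> i < \<pi> i" "\<not> Suc i < \<pi> (Suc i)" | "i < \<pi> i" "\<not> Suc i < \<pi> (Suc i)" by blast
  then show ?thesis
  proof cases
    case 1 then show ?thesis using exc_inc[OF T, of i "Suc i"] i by simp
  next
    case 2 then show ?thesis by simp
  next
    case 3 then show ?thesis using nonexc_inc[OF T, of i "Suc i"] i by simp
  next
    case 4 then show ?thesis using ne by simp
  qed
qed

lemma des_char:
  assumes T: "\<pi> \<in> centro_inv_321 (2*n)" and n: "n \<ge> 1"
  shows "Des_plus (2*n) \<pi> = {i \<in> Phi n \<pi>. Suc i \<notin> Phi n \<pi>}"
proof (rule set_eqI)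
  fix i
  have dv: "2*n div 2 = n" by simp
  show "i \<in> Des_plus (2*n) \<pi> \<longleftrightarrow> i \<in> {i \<in> Phi n \<pi>. Suc i \<notin> Phi n \<pi>}"
  proof (cases "1 \<le> i \<and> i \<le> n")
    case False
    then show ?thesis unfolding Des_plus_def Des_def Phi_def dv by auto
  next
    case True
    then have i: "1 \<le> i" "i \<le> n" "i < 2*n" using n by auto
    have L: "i \<in> Des_plus (2*n) \<pi> \<longleftrightarrow> \<pi> (Suc i) < \<pi> i"
      unfolding Des_plus_def Des_def dv using i by simp
    show ?thesis
    proof (cases "i < n")
      case True
      have "\<pi> (Suc i) < \<pi> i \<longleftrightarrow> i < \<pi> i \<and> \<not> Suc i < \<pi> (Suc i)"
        using des_step[OF T, of i] i True by simp
      then show ?thesis unfolding L Phi_def using i True by auto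
    next
      case False
      then have ie: "i = n" using i by simp
      have c: "\<pi> n + \<pi> (Suc n) = 2*n + 1" using T_centro[OF T, of n] n by simp
      have r: "\<pi> n \<le> 2*n" using T_range[OF T, of n] n by simp
      have "\<pi> (Suc n) < \<pi> n \<longleftrightarrow> n < \<pi> n" using c r by linarith
      then show ?thesis unfolding L Phi_def using ie i by auto
    qed
  qed
qed

lemma maj_stA:
  assumes T: "\<pi> \<in> centro_inv_321 (2*n)" and n: "n \<ge> 1"
  shows "maj_plus (2*n) \<pi> = stA (Phi n \<pi>)"
  unfolding maj_plus_def stA_def des_char[OF T n] ..

lemma Phi_bij: "bij_betw (Phi n) (centro_inv_321 (2*n)) (Pow {1..n})"
  unfolding bij_betw_def
proof
  show "inj_on (Phi n) (centro_inv_321 (2*n))" unfolding inj_on_def using uniq by blast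
  show "Phi n ` centro_inv_321 (2*n) = Pow {1..n}"
  proof
    show "Phi n ` centro_inv_321 (2*n) \<subseteq> Pow {1..n}" unfolding Phi_def by auto
    show "Pow {1..n} \<subseteq> Phi n ` centro_inv_321 (2*n)"
    proof
      fix S assume "S \<in> Pow {1..n}"
      then have "S \<subseteq> {1..n}" by simp
      from pS_props[OF this] show "S \<in> Phi n ` centro_inv_321 (2*n)" by (metis image_eqI)
    qed
  qed
qed

theorem mainTheorem2:
  fixes q :: "'a::comm_ring_1" and n :: nat
  assumes "n \<ge> 1"
  shows "(\<Sum>\<pi>\<in>centro_inv_321 (2 * n). q ^ maj_plus (2 * n) \<pi>)
           = (\<Sum>h=0..n. qbinomial q n h) + (q ^ n - 1) * (\<Sum>h=0..n-1. qbinomial q (n - 1) h)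
       \<and> (\<Sum>h=0..n. qbinomial q n h) + (q ^ n - 1) * (\<Sum>h=0..n-1. qbinomial q (n - 1) h)
           = (\<Sum>h=0..n. q ^ (n - h) * qbinomial q n h)"
proof -
  have e2: "(\<Sum>h=0..n. qbinomial q n h) + (q ^ n - 1) * (\<Sum>h=0..n-1. qbinomial q (n - 1) h)
           = (\<Sum>h=0..n. q ^ (n - h) * qbinomial q n h)"
    using second_eq[OF assms, of q] unfolding BB_def EE_def .
  have "(\<Sum>\<pi>\<in>centro_inv_321 (2 * n). q ^ maj_plus (2 * n) \<pi>)
        = (\<Sum>\<pi>\<in>centro_inv_321 (2 * n). q ^ stA (Phi n \<pi>))"
    by (rule sum.cong) (auto simp: maj_stA[OF _ assms])
  also have "\<dots> = (\<Sum>S\<in>Pow {1..n}. q ^ stA S)"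
    by (rule sum.reindex_bij_betw[OF Phi_bij])
  also have "\<dots> = EE q n" using AA_CC[of q n] unfolding AA_def by simp
  also have "\<dots> = (\<Sum>h=0..n. q ^ (n - h) * qbinomial q n h)" unfolding EE_def ..
  finally show ?thesis using e2 by simp
qed


end
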